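(* Let $\mathcal{G}_\mu=(\mathcal{V}_\mu,\mathcal{E}_\mu)$ be a connected undirected graph on the finite node set $\mathcal{V}_\mu=\{1,\dots,V_\mu\}$ (each node is a distributed generator, DG), with symmetric binary adjacency matrix $\mathcal{A}_\mu=[a_{ij}]$ ($a_{ii}=0$, $a_{ij}=a_{ji}=1$ iff $(i,j)\in\mathcal{E}_\mu$). For $i\in\mathcal{V}_\mu$ let $\mathcal{E}_{\mu,i}$ be the set of edges incident to $i$, so $|\mathcal{E}_{\mu,i}|$ is the degree of node $i$. Fix reference values $x_{\omega,ref},x_{U,ref}\in\mathbb{R}$ and control gains $K_{\omega i},K_{Pi},K_{Ui}>0$. Consider the discrete-time system, for $k\ge 0$ and each $i\in\mathcal{V}_\mu$, \[ x_{\omega i}(k+1)=x_{\omega i}(k)+u_{\omega i}(k),\quad x_{Pi}(k+1)=x_{Pi}(k)+u_{Pi}(k),\quad x_{Ui}(k+1)=x_{Ui}(k)+u_{Ui}(k), \] with the controls \[ u_{\omega i}(k)=K_{\omega i}\big(x_{\omega,ref}-x_{\omega i}(k)\big),\qquad u_{Pi}(k)=K_{Pi}\sum_{j:(i,j)\in\mathcal{E}_{\mu}} a_{ij}\big(x_{Pj}(k-1)-x_{Pi}(k)\big),\qquad u_{Ui}(k)=K_{Ui}\big(x_{U,ref}-x_{Ui}(k)\big), \] and arbitrary initial values (including $x_P(-1)$). Here $x_{\omega i}=\omega_i$ is the angular frequency of DG $i$, $x_{Pi}=m_{Pi}P_i$ its droop-scaled active power output, and $x_{Ui}=U_i$ its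 voltage magnitude, where the droop coefficients satisfy $m_{Pi}P_{\max,i}=m_{Pj}P_{\max,j}$ for all $i,j$, with $P_{\max,i}>0$ the active power rating of DG $i$. If \[ 0<K_{\omega i}<2,\quad 0<K_{Ui}<2,\quad 0<|\mathcal{E}_{\mu,i}|\,K_{Pi}<1\qquad\text{for all } i\in\mathcal{V}_\mu, \] then, as $k\to\infty$, $\omega_i(k)\to x_{\omega,ref}$, $U_i(k)\to x_{U,ref}$, and $\big|P_i(k)/P_{\max,i}-P_j(k)/P_{\max,j}\big|\to 0$ (equivalently $|x_{Pi}(k)-x_{Pj}(k)|\to0$) for all $i,j\in\mathcal{V}_\mu$; i.e., frequency regulation, active power sharing and voltage regulation are achieved asymptotically.
   Context: This models distributed secondary control of an islanded microgrid in which each DG runs droop control $\omega_i=\omega_{ni}-m_{Pi}P_i$, $U_i=U_{ni}-n_{Qi}Q_i$, and the set points are updated every sampling interval $T_s$ chosen no smaller than the maximal communication delay, so that neighbours' power information arrives with exactly one step of delay (the term $x_{Pj}(k-1)$). The delayed neighbour exchange takes place over the undirected communication graph $\mathcal{G}_\mu$. *)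

theory Defs
  imports Complex_Main
begin

definition undirected_graph :: "('n \<Rightarrow> 'n \<Rightarrow> bool) \<Rightarrow> bool" where
  "undirected_graph adj \<longleftrightarrow> (\<forall>i j. adj i j \<longleftrightarrow> adj j i) \<and> (\<forall>i. \<not> adj i i)"

definition connected_graph :: "('n \<Rightarrow> 'n \<Rightarrow> bool) \<Rightarrow> bool" where
  "connected_graph adj \<longleftrightarrow> (\<forall>i j. adj\<^sup>*\<^sup>* i j)"

definition degree :: "('n \<Rightarrow> 'n \<Rightarrow> bool) \<Rightarrow> 'n \<Rightarrow> nat" where
  "degree adj i = card {j. adj i j}"

end

theory Submission
  imports Defs
begin

locale dcons =
  fixes adj :: "'n::finite \<Rightarrow> 'n \<Rightarrow> bool" and a K :: "'n \<Rightarrow> real"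
  assumes sym: "\<And>i j. adj i j \<longleftrightarrow> adj j i"
  and a_pos: "\<And>i. 0 < a i" and K_pos: "\<And>i. 0 < K i"
  and sumw: "\<And>i. a i + K i * real (card {j. adj i j}) = 1"
  and reach: "\<And>r j. \<exists>p. (adj^^p) r j"
begin

definition rec :: "(nat \<Rightarrow> 'n \<Rightarrow> real) \<Rightarrow> bool" where
  "rec y \<longleftrightarrow> (\<forall>n i. y (Suc (Suc n)) i = a i * y (Suc n) i + K i * (\<Sum>j\<in>{j. adj i j}. y n j))"

definition \<alpha> :: real where "\<alpha> = Min (insert 1 (range a \<union> range K))"

lemma fin_al: "finite (insert 1 (range a \<union> range K))" by simp

lemma al_pos: "0 < \<alpha>"
  unfolding \<alpha>_def using fin_al a_pos K_pos by (subst Min_gr_iff) auto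
lemma al_le1: "\<alpha> \<le> 1" unfolding \<alpha>_def using fin_al by (intro Min_le) auto
lemma al_a: "\<alpha> \<le> a i" unfolding \<alpha>_def using fin_al by (intro Min_le) auto
lemma al_K: "\<alpha> \<le> K i" unfolding \<alpha>_def using fin_al by (intro Min_le) auto

lemma rec_neg: "rec y \<Longrightarrow> rec (\<lambda>n i. - y n i)"
  unfolding rec_def by (simp add: sum_negf)

lemma step_gen:
  assumes r: "rec y" and b0: "\<forall>j. y n j \<le> M" and b1: "\<forall>j. y (Suc n) j \<le> M"
    and s1: "y (Suc n) i \<le> M - e1" and s2: "(\<Sum>j\<in>{j. adj i j}. y n j) \<le> real (card {j. adj i j}) * M - e2"
  shows "y (Suc (Suc n)) i \<le> M - a i * e1 - K i * e2"
proof -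
  have eq: "y (Suc (Suc n)) i = a i * y (Suc n) i + K i * (\<Sum>j\<in>{j. adj i j}. y n j)"
    using r unfolding rec_def by blast
  have "a i * y (Suc n) i \<le> a i * (M - e1)" using s1 a_pos[of i] by (intro mult_left_mono) auto
  moreover have "K i * (\<Sum>j\<in>{j. adj i j}. y n j) \<le> K i * (real (card {j. adj i j}) * M - e2)"
    using s2 K_pos[of i] by (intro mult_left_mono) auto
  ultimately have "y (Suc (Suc n)) i \<le> a i * (M - e1) + K i * (real (card {j. adj i j}) * M - e2)"
    using eq by linarith
  also have "\<dots> = (a i + K i * real (card {j. adj i j})) * M - a i * e1 - K i * e2"
    by (simp add: algebra_simps)
  finally show ?thesis using sumw[of i] by simp
qed

lemma sum_le: "\<forall>j. y n j \<le> M \<Longrightarrow> (\<Sum>j\<in>{j. adj i j}. y n j) \<le> real (card {j. adj i j}) * M - 0"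
proof -
  assume h: "\<forall>j. y n j \<le> M"
  have "(\<Sum>j\<in>{j. adj i j}. y n j) \<le> (\<Sum>j\<in>{j. adj i j}. M)" using h by (intro sum_mono) auto
  then show ?thesis by simp
qed

lemma sum_le2:
  assumes h: "\<forall>j. y n j \<le> M" and j0: "adj i j0" and l: "y n j0 \<le> M - e"
  shows "(\<Sum>j\<in>{j. adj i j}. y n j) \<le> real (card {j. adj i j}) * M - e"
proof -
  have "(\<Sum>j\<in>{j. adj i j}. y n j) \<le> (\<Sum>j\<in>{j. adj i j}. M - (if j = j0 then e else 0))"
    using h l by (intro sum_mono) auto
  also have "\<dots> = real (card {j. adj i j}) * M - e"
    using j0 by (simp add: sum_subtractf sum.delta)
  finally show ?thesis .
qed

lemma step_le:
  assumes "rec y" "\<forall>j. y n j \<le> M" "\<forall>j. y (Suc n) j \<le> M"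
  shows "y (Suc (Suc n)) i \<le> M"
  using step_gen[OF assms, of i 0 0] sum_le[of y n M i] assms by auto

lemma step_self:
  assumes "rec y" "\<forall>j. y n j \<le> M" "\<forall>j. y (Suc n) j \<le> M" "y (Suc n) i \<le> M - e" "0 \<le> e"
  shows "y (Suc (Suc n)) i \<le> M - \<alpha> * e"
proof -
  have sl: "(\<Sum>j\<in>{j. adj i j}. y n j) \<le> real (card {j. adj i j}) * M - 0"
    by (rule sum_le) (rule assms(2))
  have "y (Suc (Suc n)) i \<le> M - a i * e - K i * 0"
    by (rule step_gen[OF assms(1-4) sl])
  moreover have "\<alpha> * e \<le> a i * e" using al_a assms(5) by (intro mult_right_mono) auto
  ultimately show ?thesis by simp
qed

lemma step_nb:
  assumes "rec y" "\<forall>j. y n j \<le> M" "\<forall>j. y (Suc n) j \<le> M" "adj i j0" "y n j0 \<le> M - e" "0 \<le> e"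
  shows "y (Suc (Suc n)) i \<le> M - \<alpha> * e"
proof -
  have "y (Suc (Suc n)) i \<le> M - a i * 0 - K i * e"
    using step_gen[OF assms(1-3), of i 0 e] sum_le2[of y n M i j0 e] assms by auto
  moreover have "\<alpha> * e \<le> K i * e" using al_K assms(6) by (intro mult_right_mono) auto
  ultimately show ?thesis by simp
qed

lemma inv:
  assumes r: "rec y" and b0: "\<forall>j. y n j \<le> M" and b1: "\<forall>j. y (Suc n) j \<le> M"
  shows "\<forall>j. y (n + t) j \<le> M \<and> y (Suc (n + t)) j \<le> M"
proof (induction t)
  case 0 then show ?case using b0 b1 by simp
next
  case (Suc t)
  then show ?case using step_le[OF r, of "n+t" M] by auto
qed

lemma propag:
  assumes r: "rec y" and b0: "\<forall>j. y n j \<le> M" and b1: "\<forall>j. y (Suc n) j \<le> M"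
    and lr: "y (Suc n) rr \<le> M - \<delta>" and d: "0 \<le> \<delta>"
  shows "(adj^^p) rr j \<Longrightarrow> 2 * p \<le> t \<Longrightarrow> y (Suc n + t) j \<le> M - \<alpha>^t * \<delta>"
proof (induction p arbitrary: j t)
  case 0
  then have j: "j = rr" by simp
  show ?case unfolding j
  proof (induction t)
    case 0 then show ?case using lr by simp
  next
    case (Suc t)
    have w: "\<forall>j. y (n + t) j \<le> M \<and> y (Suc (n + t)) j \<le> M" using inv[OF r b0 b1] by blast
    have nn: "0 \<le> \<alpha>^t * \<delta>" using al_pos d by simp
    have "y (Suc (Suc (n + t))) rr \<le> M - \<alpha> * (\<alpha>^t * \<delta>)"
      using Suc w nn by (intro step_self[OF r]) auto
    then show ?case by simp
  qed
next
  case (Suc p)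
  obtain j' where j': "(adj^^p) rr j'" "adj j' j" using Suc.prems(1) by (auto elim: relpowp_Suc_E)
  obtain s where s: "t = s + 2" "2 * p \<le> s" proof -
    have "t = (t - 2) + 2 \<and> 2 * p \<le> t - 2" using Suc.prems(2) by arith
    then show ?thesis using that by blast
  qed
  have ih: "y (Suc n + s) j' \<le> M - \<alpha>^s * \<delta>" using Suc.IH[OF j'(1) s(2)] .
  have nn: "0 \<le> \<alpha>^s * \<delta>" using al_pos d by simp
  have jj: "adj j j'" using sym[of j j'] j'(2) by blast
  have w: "\<forall>j. y (Suc n + s) j \<le> M \<and> y (Suc (Suc n + s)) j \<le> M" using inv[OF r b0 b1, of "Suc s"] by simp
  have "y (Suc (Suc (Suc n + s))) j \<le> M - \<alpha> * (\<alpha>^s * \<delta>)"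
    using w ih nn jj by (intro step_nb[OF r, of _ _ _ j']) auto
  moreover have "\<alpha>^(s+2) * \<delta> \<le> \<alpha> * (\<alpha>^s * \<delta>)"
  proof -
    have "\<alpha>^(s+2) = \<alpha> * \<alpha>^s * \<alpha>" by (simp add: power_add power2_eq_square)
    also have "\<dots> \<le> \<alpha> * \<alpha>^s" using al_le1 al_pos by (simp add: mult_left_le)
    finally have "\<alpha>^(s+2) * \<delta> \<le> (\<alpha> * \<alpha>^s) * \<delta>" using d by (rule mult_right_mono)
    then show ?thesis by (simp add: mult.assoc)
  qed
  ultimately show ?case using s(1) by simp
qed


definition Pd :: "'n \<Rightarrow> 'n \<Rightarrow> nat" where "Pd r j = (LEAST p. (adj^^p) r j)"
definition NN :: nat where "NN = Max (range (\<lambda>(r,j). Pd r j))"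
definition \<beta> :: real where "\<beta> = \<alpha>^(Suc (2*NN))"
definition SS :: nat where "SS = Suc (2*NN)"

lemma Pd_path: "(adj^^(Pd r j)) r j"
  unfolding Pd_def using reach[of r j] by (rule LeastI_ex)

lemma Pd_le: "Pd r j \<le> NN"
proof -
  have "(\<lambda>(r,j). Pd r j) (r,j) \<le> NN" unfolding NN_def by (rule Max_ge) auto
  then show ?thesis by simp
qed

lemma be_pos: "0 < \<beta>" unfolding \<beta>_def using al_pos by simp
lemma be_le1: "\<beta> \<le> 1" unfolding \<beta>_def using al_pos al_le1 by (intro power_le_one) auto

lemma upper_contr:
  assumes r: "rec y" and b0: "\<forall>j. y n j \<le> M" and b1: "\<forall>j. y (Suc n) j \<le> M"
    and lr: "y (Suc n) rr \<le> M - \<delta>" and d: "0 \<le> \<delta>"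
  shows "y (n + SS) j \<le> M - \<beta> * \<delta> \<and> y (Suc (n + SS)) j \<le> M - \<beta> * \<delta>"
proof -
  have p2: "2 * Pd rr j \<le> 2 * NN" using Pd_le by simp
  have A: "y (Suc n + 2 * NN) j \<le> M - \<alpha>^(2*NN) * \<delta>"
    using propag[OF r b0 b1 lr d Pd_path p2] .
  have B: "y (Suc n + Suc (2 * NN)) j \<le> M - \<alpha>^(Suc (2*NN)) * \<delta>"
    using propag[OF r b0 b1 lr d Pd_path, of j "Suc (2*NN)"] p2 by simp
  have "\<alpha>^(Suc (2*NN)) \<le> \<alpha>^(2*NN)" using al_pos al_le1 by (intro power_decreasing) auto
  then have "\<beta> * \<delta> \<le> \<alpha>^(2*NN) * \<delta>" unfolding \<beta>_def using d by (rule mult_right_mono)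
  then show ?thesis using A B unfolding SS_def \<beta>_def by simp
qed


lemma contr:
  assumes r: "rec y" and w: "\<forall>j. m \<le> y n j \<and> y n j \<le> M \<and> m \<le> y (Suc n) j \<and> y (Suc n) j \<le> M"
  shows "\<exists>m' M'. M' - m' \<le> (1 - \<beta>/2)*(M-m) \<and> (\<forall>j. m' \<le> y (n+SS) j \<and> y (n+SS) j \<le> M' \<and> m' \<le> y (Suc(n+SS)) j \<and> y (Suc (n+SS)) j \<le> M')"
proof -
  define rr :: 'n where "rr = undefined"
  have rn: "rec (\<lambda>n i. - y n i)" using rec_neg[OF r] .
  have up: "\<forall>j. y (n + t) j \<le> M \<and> y (Suc (n + t)) j \<le> M" for t using inv[OF r, of n M] w by blast
  have lo0: "\<forall>j. - y (n + t) j \<le> - m \<and> - y (Suc (n + t)) j \<le> - m" for t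
    using inv[OF rn, of n "-m" t] w by simp
  have lo: "\<forall>j. m \<le> y (n + t) j \<and> m \<le> y (Suc (n + t)) j" for t using lo0[of t] by simp
  have mM: "m \<le> M" using w by force
  show ?thesis
  proof (cases "y (Suc n) rr \<le> (M+m)/2")
    case True
    define \<delta> where "\<delta> = M - y (Suc n) rr"
    have d: "(M-m)/2 \<le> \<delta>" using True unfolding \<delta>_def by simp
    have d0: "0 \<le> \<delta>" using d mM by simp
    have "\<beta> * ((M-m)/2) \<le> \<beta> * \<delta>" using d be_pos by (intro mult_left_mono) auto
    then have U: "y (n + SS) j \<le> M - \<beta> * ((M-m)/2) \<and> y (Suc (n + SS)) j \<le> M - \<beta> * ((M-m)/2)" for j
      using upper_contr[OF r, of n M rr \<delta> j] w d0 unfolding \<delta>_def by force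
    show ?thesis
      apply (rule exI[of _ m], rule exI[of _ "M - \<beta> * ((M-m)/2)"])
      using U lo[of SS] by (auto simp: algebra_simps)
  next
    case False
    define \<delta> where "\<delta> = y (Suc n) rr - m"
    have d: "(M-m)/2 \<le> \<delta>" using False unfolding \<delta>_def by simp
    have d0: "0 \<le> \<delta>" using d mM by simp
    have "\<beta> * ((M-m)/2) \<le> \<beta> * \<delta>" using d be_pos by (intro mult_left_mono) auto
    then have U: "- y (n + SS) j \<le> - m - \<beta> * ((M-m)/2) \<and> - y (Suc (n + SS)) j \<le> - m - \<beta> * ((M-m)/2)" for j
      using upper_contr[OF rn, of n "-m" rr \<delta> j] w d0 unfolding \<delta>_def by force
    show ?thesis
      apply (rule exI[of _ "m + \<beta> * ((M-m)/2)"], rule exI[of _ M])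
      using U up[of SS] by (auto simp: algebra_simps)
  qed
qed


lemma iter:
  assumes r: "rec y" and w: "\<forall>j. m0 \<le> y 0 j \<and> y 0 j \<le> M0 \<and> m0 \<le> y (Suc 0) j \<and> y (Suc 0) j \<le> M0"
  shows "\<exists>m M. M - m \<le> (1 - \<beta>/2)^q * (M0-m0) \<and> (\<forall>j. m \<le> y (q*SS) j \<and> y (q*SS) j \<le> M \<and> m \<le> y (Suc(q*SS)) j \<and> y (Suc (q*SS)) j \<le> M)"
proof (induction q)
  case 0 then show ?case using w by auto
next
  case (Suc q)
  then obtain m M where mM: "M - m \<le> (1 - \<beta>/2)^q * (M0-m0)"
    "\<forall>j. m \<le> y (q*SS) j \<and> y (q*SS) j \<le> M \<and> m \<le> y (Suc(q*SS)) j \<and> y (Suc (q*SS)) j \<le> M" by blast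
  obtain m' M' where m'M': "M' - m' \<le> (1 - \<beta>/2)*(M-m)"
    "\<forall>j. m' \<le> y (q*SS+SS) j \<and> y (q*SS+SS) j \<le> M' \<and> m' \<le> y (Suc(q*SS+SS)) j \<and> y (Suc (q*SS+SS)) j \<le> M'"
    using contr[OF r mM(2)] by blast
  have c0: "0 \<le> 1 - \<beta>/2" using be_le1 by simp
  have "M' - m' \<le> (1 - \<beta>/2) * ((1 - \<beta>/2)^q * (M0-m0))"
    using m'M'(1) mult_left_mono[OF mM(1) c0] by linarith
  then have "M' - m' \<le> (1 - \<beta>/2)^Suc q * (M0-m0)" by (simp add: mult.assoc)
  moreover have "Suc q * SS = q*SS+SS" by simp
  ultimately show ?case using m'M'(2) by metis
qed

lemma conv:
  assumes r: "rec y"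
  shows "(\<lambda>n. \<bar>y n i - y n j\<bar>) \<longlonglongrightarrow> 0"
proof (rule LIMSEQ_I)
  fix e :: real assume e: "0 < e"
  define A where "A = range (y 0) \<union> range (y (Suc 0))"
  have fA: "finite A" "A \<noteq> {}" unfolding A_def by auto
  define m0 where "m0 = Min A"
  define M0 where "M0 = Max A"
  have w: "\<forall>j. m0 \<le> y 0 j \<and> y 0 j \<le> M0 \<and> m0 \<le> y (Suc 0) j \<and> y (Suc 0) j \<le> M0"
    unfolding m0_def M0_def using fA unfolding A_def by auto
  define c where "c = 1 - \<beta>/2"
  have c: "0 \<le> c" "c < 1" unfolding c_def using be_pos be_le1 by auto
  have "(\<lambda>q. c^q * (M0-m0)) \<longlonglongrightarrow> 0 * (M0-m0)"
    by (intro tendsto_intros LIMSEQ_power_zero) (use c in auto)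
  then obtain q where q: "\<forall>n\<ge>q. norm (c^n * (M0-m0) - 0) < e" using LIMSEQ_D[OF _ e] by fastforce
  obtain m M where mM: "M - m \<le> c^q * (M0-m0)"
    "\<forall>j. m \<le> y (q*SS) j \<and> y (q*SS) j \<le> M \<and> m \<le> y (Suc(q*SS)) j \<and> y (Suc (q*SS)) j \<le> M"
    using iter[OF r w, of q] unfolding c_def by blast
  have rn: "rec (\<lambda>n i. - y n i)" using rec_neg[OF r] .
  show "\<exists>no. \<forall>n\<ge>no. norm (\<bar>y n i - y n j\<bar> - 0) < e"
  proof (intro exI allI impI)
    fix n assume n: "q*SS \<le> n"
    then obtain t where t: "n = q*SS + t" using le_Suc_ex by blast
    have up: "\<forall>k. y n k \<le> M" using inv[OF r, of "q*SS" M t] mM(2) t by blast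
    have lo0: "\<forall>k. - y n k \<le> - m" using inv[OF rn, of "q*SS" "-m" t] mM(2) t by simp
    have "\<bar>y n i - y n j\<bar> \<le> M - m" using up lo0 by (smt (verit))
    also have "\<dots> \<le> c^q * (M0-m0)" by (rule mM(1))
    also have "\<dots> < e" using q by auto
    finally show "norm (\<bar>y n i - y n j\<bar> - 0) < e" by simp
  qed
qed

end

lemma geom:
  fixes x :: "int \<Rightarrow> real"
  assumes K: "0 < K" "K < 2" and d: "\<And>k. k \<ge> 0 \<Longrightarrow> x (k + 1) = x k + K * (r - x k)"
  shows "(\<lambda>k::nat. x (int k)) \<longlonglongrightarrow> r"
proof -
  have e: "x (int k) - r = (1 - K)^k * (x 0 - r)" for k
  proof (induction k)
    case 0 then show ?case by simp
  next
    case (Suc k)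
    have "x (int (Suc k)) = x (int k) + K * (r - x (int k))" using d[of "int k"] by (simp add: add.commute)
    then have "x (int (Suc k)) - r = (1 - K) * (x (int k) - r)" by (simp add: algebra_simps)
    then show ?case using Suc by simp
  qed
  have n1: "norm (1 - K) < 1" using K by (simp add: abs_if)
  have L0: "(\<lambda>k. (1 - K)^k) \<longlonglongrightarrow> 0" using LIMSEQ_power_zero[OF n1] by simp
  have L1: "(\<lambda>k. (1 - K)^k * (x 0 - r)) \<longlonglongrightarrow> 0 * (x 0 - r)"
    using tendsto_mult[OF L0 tendsto_const] by simp
  have "(\<lambda>k. (1 - K)^k * (x 0 - r) + r) \<longlonglongrightarrow> 0 * (x 0 - r) + r"
    using tendsto_add[OF L1 tendsto_const[of r]] by simp
  moreover have "(\<lambda>k. (1 - K)^k * (x 0 - r) + r) = (\<lambda>k. x (int k))"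
    using e by (auto simp: fun_eq_iff algebra_simps)
  ultimately show ?thesis by simp
qed

theorem theorem1:
  fixes adj :: "'n::finite \<Rightarrow> 'n \<Rightarrow> bool"
    and x\<^sub>\<omega> x\<^sub>P x\<^sub>U P :: "int \<Rightarrow> 'n \<Rightarrow> real"
    and K\<^sub>\<omega> K\<^sub>P K\<^sub>U mP Pmax :: "'n \<Rightarrow> real"
    and \<omega>ref Uref :: real
  assumes graph: "undirected_graph adj"
    and conn: "connected_graph adj"
    and Kw: "\<And>i. 0 < K\<^sub>\<omega> i \<and> K\<^sub>\<omega> i < 2"
    and KU: "\<And>i. 0 < K\<^sub>U i \<and> K\<^sub>U i < 2"
    and KPpos: "\<And>i. 0 < K\<^sub>P i"
    and KP: "\<And>i. 0 < real (degree adj i) * K\<^sub>P i \<and> real (degree adj i) * K\<^sub>P i < 1"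
    and dyn_w: "\<And>k i. k \<ge> 0 \<Longrightarrow>
        x\<^sub>\<omega> (k + 1) i = x\<^sub>\<omega> k i + K\<^sub>\<omega> i * (\<omega>ref - x\<^sub>\<omega> k i)"
    and dyn_P: "\<And>k i. k \<ge> 0 \<Longrightarrow>
        x\<^sub>P (k + 1) i = x\<^sub>P k i + K\<^sub>P i * (\<Sum>j\<in>{j. adj i j}. x\<^sub>P (k - 1) j - x\<^sub>P k i)"
    and dyn_U: "\<And>k i. k \<ge> 0 \<Longrightarrow>
        x\<^sub>U (k + 1) i = x\<^sub>U k i + K\<^sub>U i * (Uref - x\<^sub>U k i)"
    and Pmax_pos: "\<And>i. 0 < Pmax i"
    and mP_pos: "\<And>i. 0 < mP i"
    and droop_equal: "\<And>i j. mP i * Pmax i = mP j * Pmax j"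
    and xP_def: "\<And>k i. x\<^sub>P k i = mP i * P k i"
  shows "(\<forall>i. (\<lambda>k::nat. x\<^sub>\<omega> (int k) i) \<longlonglongrightarrow> \<omega>ref)
       \<and> (\<forall>i. (\<lambda>k::nat. x\<^sub>U (int k) i) \<longlonglongrightarrow> Uref)
       \<and> (\<forall>i j. (\<lambda>k::nat. \<bar>P (int k) i / Pmax i - P (int k) j / Pmax j\<bar>) \<longlonglongrightarrow> 0)
       \<and> (\<forall>i j. (\<lambda>k::nat. \<bar>x\<^sub>P (int k) i - x\<^sub>P (int k) j\<bar>) \<longlonglongrightarrow> 0)"
  proof -
  have symm: "\<And>i j. adj i j \<longleftrightarrow> adj j i" using graph unfolding undirected_graph_def by blast
  interpret D: dcons adj "\<lambda>i. 1 - real (degree adj i) * K\<^sub>P i" K\<^sub>P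
  proof
    show "\<And>i j. adj i j \<longleftrightarrow> adj j i" by (rule symm)
    show "\<And>i. 0 < 1 - real (degree adj i) * K\<^sub>P i" using KP by simp
    show "\<And>i. 0 < K\<^sub>P i" by (rule KPpos)
    show "\<And>i. 1 - real (degree adj i) * K\<^sub>P i + K\<^sub>P i * real (card {j. adj i j}) = 1"
      unfolding degree_def by simp
    show "\<And>r j. \<exists>p. (adj^^p) r j" using conn unfolding connected_graph_def rtranclp_power by blast
  qed
  define y where "y n i = x\<^sub>P (int n - 1) i" for n i
  have ry: "D.rec y"
    unfolding D.rec_def
  proof (intro allI)
    fix n i
    have "y (Suc (Suc n)) i = x\<^sub>P (int n + 1) i" unfolding y_def by (simp add: add.commute)
    also have "\<dots> = x\<^sub>P (int n) i + K\<^sub>P i * (\<Sum>j\<in>{j. adj i j}. x\<^sub>P (int n - 1) j - x\<^sub>P (int n) i)"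
      using dyn_P[of "int n" i] by simp
    also have "\<dots> = (1 - real (degree adj i) * K\<^sub>P i) * x\<^sub>P (int n) i + K\<^sub>P i * (\<Sum>j\<in>{j. adj i j}. x\<^sub>P (int n - 1) j)"
      unfolding degree_def by (simp add: sum_subtractf algebra_simps)
    also have "\<dots> = (1 - real (degree adj i) * K\<^sub>P i) * y (Suc n) i + K\<^sub>P i * (\<Sum>j\<in>{j. adj i j}. y n j)"
      unfolding y_def by simp
    finally show "y (Suc (Suc n)) i = (1 - real (degree adj i) * K\<^sub>P i) * y (Suc n) i + K\<^sub>P i * (\<Sum>j\<in>{j. adj i j}. y n j)" .
  qed
  have C4: "\<forall>i j. (\<lambda>k::nat. \<bar>x\<^sub>P (int k) i - x\<^sub>P (int k) j\<bar>) \<longlonglongrightarrow> 0"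
  proof (intro allI)
    fix i j
    have "(\<lambda>n. \<bar>y (Suc n) i - y (Suc n) j\<bar>) \<longlonglongrightarrow> 0" using LIMSEQ_Suc[OF D.conv[OF ry, of i j]] .
    then show "(\<lambda>k::nat. \<bar>x\<^sub>P (int k) i - x\<^sub>P (int k) j\<bar>) \<longlonglongrightarrow> 0" unfolding y_def by simp
  qed
  have C3: "\<forall>i j. (\<lambda>k::nat. \<bar>P (int k) i / Pmax i - P (int k) j / Pmax j\<bar>) \<longlonglongrightarrow> 0"
  proof (intro allI)
    fix i j
    define c where "c = mP i * Pmax i"
    have c: "0 < c" unfolding c_def using mP_pos Pmax_pos by simp
    have cj: "c = mP j * Pmax j" unfolding c_def by (rule droop_equal)
    have eq: "\<bar>P k i / Pmax i - P k j / Pmax j\<bar> = \<bar>x\<^sub>P k i - x\<^sub>P k j\<bar> / c" for k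
    proof -
      have "P k i / Pmax i = x\<^sub>P k i / c" unfolding c_def xP_def using mP_pos[of i] by simp
      moreover have "P k j / Pmax j = x\<^sub>P k j / c" unfolding cj xP_def using mP_pos[of j] by simp
      ultimately show ?thesis using c by (simp add: diff_divide_distrib[symmetric])
    qed
    have "(\<lambda>k::nat. \<bar>x\<^sub>P (int k) i - x\<^sub>P (int k) j\<bar> / c) \<longlonglongrightarrow> 0 / c"
      using C4 c by (intro tendsto_intros) auto
    then show "(\<lambda>k::nat. \<bar>P (int k) i / Pmax i - P (int k) j / Pmax j\<bar>) \<longlonglongrightarrow> 0" using eq by simp
  qed
  have C1: "\<forall>i. (\<lambda>k::nat. x\<^sub>\<omega> (int k) i) \<longlonglongrightarrow> \<omega>ref"
    using Kw dyn_w by (intro allI geom) auto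
  have C2: "\<forall>i. (\<lambda>k::nat. x\<^sub>U (int k) i) \<longlonglongrightarrow> Uref"
    using KU dyn_U by (intro allI geom) auto
  show ?thesis using C1 C2 C3 C4 by blast
qed

end
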